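(* Let $\mathbf C\in\mathbb C^{N\times N}$ be a diagonal matrix with exactly one diagonal entry equal to $1$ (at an unknown position $\sigma$) and all other entries $0$. Let $U_{\mathbf C}$ be a block-encoding of $\mathbf C$ and let $V_{\mathbf C}$ be a unitary with $V_{\mathbf C}|0\rangle=|C\rangle\rangle=|\sigma,\sigma\rangle$. Then any quantum algorithm that finds $\sigma$ with probability at least $2/3$ for all instances requires $\Omega(\sqrt N)$ queries to $U_{\mathbf C}$ (including inverses and controlled versions), whereas a single application of $V_{\mathbf C}$ to $|0\rangle$ followed by a computational-basis measurement determines $\sigma$ with certainty.
   Context: Vectorization: $|F\rangle\rangle:=\sum_{j,k}f_{jk}|j,k\rangle$ for ${\bf F}=\sum f_{jk}|j\rangle\langle k|$. A block-encoding of ${\bf M}$ with $\|{\bf M}\|\le1$ is a unitary $U$ on $\mathbb C^N\otimes\mathbb C^d$ with $(\mathbb 1_N\otimes\langle0|)U(\mathbb 1_N\otimes|0\rangle)={\bf M}$; the oracle $U_{\mathbf C}$ may be any such unitary. *)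

theory Defs
  imports Complex_Main "Jordan_Normal_Form.Matrix"
begin

definition adj :: "complex mat \<Rightarrow> complex mat" where
  "adj U = mat (dim_col U) (dim_row U) (\<lambda>(i,j). cnj (U $$ (j,i)))"

definition unitary_mat :: "nat \<Rightarrow> complex mat \<Rightarrow> bool" where
  "unitary_mat n U \<longleftrightarrow> U \<in> carrier_mat n n \<and> adj U * U = 1\<^sub>m n \<and> U * adj U = 1\<^sub>m n"

definition ket :: "nat \<Rightarrow> nat \<Rightarrow> complex vec" where
  "ket n k = vec n (\<lambda>i. if i = k then 1 else 0)"

text \<open>Tensor conventions: |x> (x) |y> with y ranging over m values has index x*m+y.\<close>

text \<open>Vectorization |F>> = sum_{j,k} f_jk |j,k>.\<close>
definition vectorize :: "complex mat \<Rightarrow> complex vec" where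
  "vectorize F = vec (dim_row F * dim_col F)
     (\<lambda>i. F $$ (i div dim_col F, i mod dim_col F))"

definition diag_C :: "nat \<Rightarrow> nat \<Rightarrow> complex mat" where
  "diag_C N \<sigma> = mat N N (\<lambda>(i,j). if i = \<sigma> \<and> j = \<sigma> then 1 else 0)"

text \<open>Block-encoding on C^N (x) C^d: (1_N (x) <0|) U (1_N (x) |0>) = M.\<close>
definition block_encoding :: "nat \<Rightarrow> nat \<Rightarrow> complex mat \<Rightarrow> complex mat \<Rightarrow> bool" where
  "block_encoding N d M U \<longleftrightarrow> unitary_mat (N*d) U \<and> 0 < d \<and>
     (\<forall>i<N. \<forall>j<N. U $$ (i*d, j*d) = M $$ (i,j))"

definition tensor_id :: "complex mat \<Rightarrow> nat \<Rightarrow> complex mat" where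
  "tensor_id B W = mat (dim_row B * W) (dim_col B * W)
     (\<lambda>(i,j). if i mod W = j mod W then B $$ (i div W, j div W) else 0)"

text \<open>Controlled version |0><0| (x) 1 + |1><1| (x) B, control qubit first.\<close>
definition controlled :: "complex mat \<Rightarrow> complex mat" where
  "controlled B = four_block_mat (1\<^sub>m (dim_row B)) (0\<^sub>m (dim_row B) (dim_col B))
                                  (0\<^sub>m (dim_row B) (dim_col B)) B"

text \<open>Query gate acting on C^2 (x) (C^N (x) C^d) (x) C^W: controlled U, or controlled
  inverse U^dagger when the flag is True.  Uncontrolled calls are simulated by
  preparing the control qubit in |1> with the interleaved unitaries.\<close>
definition query_gate :: "complex mat \<Rightarrow> nat \<Rightarrow> bool \<Rightarrow> complex mat" where
  "query_gate U W is_inv = tensor_id (controlled (if is_inv then adj U else U)) W"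

text \<open>A T-query algorithm is a list of T steps (A_k, inv_k) followed by a final unitary;
  step k applies A_k and then a query.  Started in |0>.\<close>
fun run_steps :: "complex mat \<Rightarrow> nat \<Rightarrow> (complex mat \<times> bool) list \<Rightarrow> complex vec \<Rightarrow> complex vec" where
  "run_steps U W [] v = v"
| "run_steps U W ((A, is_inv) # rest) v = run_steps U W rest (query_gate U W is_inv *\<^sub>v (A *\<^sub>v v))"

definition final_state ::
  "complex mat \<Rightarrow> nat \<Rightarrow> (complex mat \<times> bool) list \<Rightarrow> complex mat \<Rightarrow> nat \<Rightarrow> complex vec" where
  "final_state U W steps Af D = Af *\<^sub>v run_steps U W steps (ket D 0)"

definition valid_alg :: "nat \<Rightarrow> (complex mat \<times> bool) list \<Rightarrow> complex mat \<Rightarrow> bool" where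
  "valid_alg D steps Af \<longleftrightarrow> unitary_mat D Af \<and> (\<forall>s \<in> set steps. unitary_mat D (fst s))"

definition outcome_prob :: "complex vec \<Rightarrow> (nat \<Rightarrow> nat) \<Rightarrow> nat \<Rightarrow> real" where
  "outcome_prob v out x = (\<Sum>k<dim_vec v. if out k = x then (cmod (v $ k))\<^sup>2 else 0)"

end

theory Submission
  imports Defs "HOL-Analysis.L2_Norm"
begin

definition pmat :: "nat \<Rightarrow> (nat \<Rightarrow> nat) \<Rightarrow> complex mat" where
  "pmat n p = mat n n (\<lambda>(i,j). if j = p i then 1 else 0)"

lemma pmat_carrier[simp]: "pmat n p \<in> carrier_mat n n"
  "dim_row (pmat n p) = n" "dim_col (pmat n p) = n"
  by (auto simp: pmat_def)

lemma pmat_index[simp]: "i < n \<Longrightarrow> j < n \<Longrightarrow> pmat n p $$ (i,j) = (if j = p i then 1 else 0)"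
  by (simp add: pmat_def)

lemma sum_ind: "finite A \<Longrightarrow> (\<Sum>j\<in>A. (if j = a then (1::complex) else 0) * f j) = (if a \<in> A then f a else 0)"
proof -
  assume "finite A"
  have "(\<Sum>j\<in>A. (if j = a then (1::complex) else 0) * f j) = (\<Sum>j\<in>A. if j = a then f j else 0)"
    by (rule sum.cong) auto
  thus ?thesis using \<open>finite A\<close> by simp
qed

lemma pmat_mult_vec:
  assumes "v \<in> carrier_vec n" "i < n" "p i < n"
  shows "(pmat n p *\<^sub>v v) $ i = v $ (p i)"
proof -
  have "(pmat n p *\<^sub>v v) $ i = (\<Sum>j\<in>{0..<n}. (if j = p i then 1 else 0) * v $ j)"
    using assms by (simp add: scalar_prod_def)
  also have "\<dots> = v $ (p i)" using assms by (simp add: sum_ind)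
  finally show ?thesis .
qed

definition invol :: "nat \<Rightarrow> (nat \<Rightarrow> nat) \<Rightarrow> bool" where
  "invol n p \<longleftrightarrow> (\<forall>i<n. p i < n \<and> p (p i) = i)"

lemma adj_pmat: assumes "invol n p" shows "adj (pmat n p) = pmat n p"
proof (rule eq_matI)
  fix i j assume ij: "i < dim_row (pmat n p)" "j < dim_col (pmat n p)"
  hence ij': "i < n" "j < n" by auto
  have e: "(i = p j) = (j = p i)" using assms ij' unfolding invol_def by metis
  have "adj (pmat n p) $$ (i, j) = cnj (pmat n p $$ (j,i))" using ij' by (simp add: adj_def)
  also have "\<dots> = (if i = p j then 1 else 0)" using ij' by simp
  finally show "adj (pmat n p) $$ (i, j) = pmat n p $$ (i, j)" using ij' e by simp
qed (simp_all add: adj_def)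

lemma pmat_sq: assumes "invol n p" shows "pmat n p * pmat n p = 1\<^sub>m n"
proof (rule eq_matI)
  fix i j assume ij: "i < dim_row (1\<^sub>m n)" "j < dim_col (1\<^sub>m n)"
  have pi: "p i < n" "p (p i) = i" using assms ij unfolding invol_def by auto
  have "(pmat n p * pmat n p) $$ (i,j) = (\<Sum>k\<in>{0..<n}. (if k = p i then 1 else 0) * (if j = p k then 1 else 0))"
    using ij by (simp add: scalar_prod_def)
  also have "\<dots> = (if j = p (p i) then 1 else 0)" using pi by (simp add: sum_ind)
  finally show "(pmat n p * pmat n p) $$ (i,j) = 1\<^sub>m n $$ (i,j)" using ij pi by auto
qed auto

lemma unitary_pmat: "invol n p \<Longrightarrow> unitary_mat n (pmat n p)"
  unfolding unitary_mat_def by (simp add: adj_pmat pmat_sq)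

definition qq :: "nat \<Rightarrow> nat \<Rightarrow> nat \<Rightarrow> nat" where
  "qq d s r = (r div d) * d + (if r div d \<noteq> s \<and> r mod d < 2 then 1 - r mod d else r mod d)"

lemma qq_lt: assumes "(d::nat) \<ge> 2" shows "(if r div d \<noteq> s \<and> r mod d < 2 then 1 - r mod d else r mod d) < d"
  using assms by (auto intro: pos_mod_bound[of d r, simplified])

lemma qq_div[simp]: assumes "(d::nat) \<ge> 2" shows "qq d s r div d = r div d"
  and "qq d s r mod d = (if r div d \<noteq> s \<and> r mod d < 2 then 1 - r mod d else r mod d)"
  using qq_lt[OF assms, of r s] assms unfolding qq_def by auto

lemma qq_invol: assumes "d \<ge> 2" shows "invol (N*d) (qq d s)"
  unfolding invol_def
proof (intro allI impI conjI)
  fix i assume i: "i < N*d"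
  have "i div d < N" using i by (simp add: less_mult_imp_div_less)
  hence "qq d s i div d < N" using assms by simp
  thus "qq d s i < N*d" using assms
    by (metis div_less_iff_less_mult mult.commute not_numeral_le_zero not_gr_zero)
  show "qq d s (qq d s i) = i"
    using assms qq_div[OF assms, of s i] unfolding qq_def[of d s "qq d s i"]
    by (auto simp: qq_div[OF assms])
qed

definition Uo :: "nat \<Rightarrow> nat \<Rightarrow> nat \<Rightarrow> complex mat" where
  "Uo N d s = pmat (N*d) (qq d s)"

lemma Uo_be: assumes "d \<ge> 2" "s < N" shows "block_encoding N d (diag_C N s) (Uo N d s)"
  unfolding block_encoding_def
proof (intro conjI allI impI)
  show "unitary_mat (N*d) (Uo N d s)" using unitary_pmat[OF qq_invol[OF assms(1)]] by (simp add: Uo_def)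
  show "0 < d" using assms by simp
  fix i j assume ij: "i < N" "j < N"
  have lt: "i*d < N*d" "j*d < N*d" using ij assms by auto
  have q: "qq d s (i*d) = i*d + (if i \<noteq> s then 1 else 0)" using assms by (simp add: qq_def)
  have "(j*d = i*d + (if i \<noteq> s then 1 else 0)) = (i = s \<and> j = s)"
  proof
    assume h: "j*d = i*d + (if i \<noteq> s then 1 else 0)"
    have "i = s"
    proof (rule ccontr)
      assume "i \<noteq> s" hence "j*d = i*d + 1" using h by simp
      hence "(j*d) mod d = (i*d+1) mod d" by simp
      moreover have "(i*d+1) mod d = 1" using assms by (simp add: mod_Suc)
      ultimately show False using assms by simp
    qed
    thus "i = s \<and> j = s" using h assms by simp
  qed simp
  thus "Uo N d s $$ (i * d, j * d) = diag_C N s $$ (i, j)"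
    using lt ij q by (simp add: Uo_def diag_C_def)
qed

lemma adj_Uo: "d \<ge> 2 \<Longrightarrow> adj (Uo N d s) = Uo N d s"
  unfolding Uo_def using adj_pmat qq_invol by blast


definition cq :: "nat \<Rightarrow> (nat \<Rightarrow> nat) \<Rightarrow> nat \<Rightarrow> nat" where
  "cq M p r = (if r < M then r else M + p (r - M))"

lemma controlled_pmat: "controlled (pmat M p) = pmat (M+M) (cq M p)"
proof (rule eq_matI)
  fix i j assume ij: "i < dim_row (pmat (M+M) (cq M p))" "j < dim_col (pmat (M+M) (cq M p))"
  hence ij': "i < M+M" "j < M+M" by auto
  show "controlled (pmat M p) $$ (i, j) = pmat (M+M) (cq M p) $$ (i, j)"
    using ij' unfolding controlled_def cq_def by (auto simp: index_mat_four_block)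
qed (auto simp: controlled_def)

lemma invol_cq: "invol M p \<Longrightarrow> invol (M+M) (cq M p)"
  unfolding invol_def cq_def by auto

definition tq :: "nat \<Rightarrow> (nat \<Rightarrow> nat) \<Rightarrow> nat \<Rightarrow> nat" where
  "tq W p i = p (i div W) * W + i mod W"

lemma tq_div: "0 < W \<Longrightarrow> tq W p i div W = p (i div W)" "0 < W \<Longrightarrow> tq W p i mod W = i mod W"
  unfolding tq_def by auto

lemma tensor_pmat: assumes "0 < W" shows "tensor_id (pmat n p) W = pmat (n*W) (tq W p)"
proof (rule eq_matI)
  fix i j assume ij: "i < dim_row (pmat (n*W) (tq W p))" "j < dim_col (pmat (n*W) (tq W p))"
  hence ij': "i < n*W" "j < n*W" by auto
  hence dv: "i div W < n" "j div W < n" by (simp_all add: less_mult_imp_div_less)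
  have e: "(j = tq W p i) = (j div W = p (i div W) \<and> j mod W = i mod W)"
    unfolding tq_def using assms by (metis div_mult_mod_eq mod_div_trivial mod_mod_trivial tq_def tq_div)
  show "tensor_id (pmat n p) W $$ (i, j) = pmat (n*W) (tq W p) $$ (i, j)"
    using ij' dv e unfolding tensor_id_def by auto
qed (auto simp: tensor_id_def)

lemma invol_tq: assumes "0 < W" "invol n p" shows "invol (n*W) (tq W p)"
  unfolding invol_def
proof (intro allI impI conjI)
  fix i assume i: "i < n*W"
  hence dv: "i div W < n" by (simp add: less_mult_imp_div_less)
  hence "p (i div W) < n" using assms unfolding invol_def by auto
  hence "tq W p i div W < n" using tq_div assms by simp
  thus "tq W p i < n*W" using assms by (metis div_less_iff_less_mult)
  have "tq W p (tq W p i) div W = i div W" "tq W p (tq W p i) mod W = i mod W"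
    using assms dv unfolding invol_def by (simp_all add: tq_div)
  thus "tq W p (tq W p i) = i" by (metis div_mult_mod_eq)
qed

definition gg :: "nat \<Rightarrow> nat \<Rightarrow> nat \<Rightarrow> nat \<Rightarrow> nat \<Rightarrow> nat" where
  "gg N d W s = tq W (cq (N*d) (qq d s))"

lemma gate_eq: assumes "d \<ge> 2" "0 < W"
  shows "query_gate (Uo N d s) W b = pmat (2*(N*d)*W) (gg N d W s)"
proof -
  have "query_gate (Uo N d s) W b = tensor_id (controlled (Uo N d s)) W"
    using adj_Uo[OF assms(1)] unfolding query_gate_def by simp
  also have "\<dots> = pmat ((N*d + N*d)*W) (gg N d W s)"
    unfolding Uo_def controlled_pmat tensor_pmat[OF assms(2)] gg_def ..
  finally show ?thesis by (simp add: mult_2)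
qed

lemma invol_gg: assumes "d \<ge> 2" "0 < W" shows "invol (2*(N*d)*W) (gg N d W s)"
  using invol_tq[OF assms(2) invol_cq[OF qq_invol[OF assms(1)]]] unfolding gg_def by (simp add: mult_2)

definition lab :: "nat \<Rightarrow> nat \<Rightarrow> nat \<Rightarrow> nat \<Rightarrow> nat" where
  "lab N d W i = (if N*d \<le> i div W \<and> (i div W - N*d) mod d < 2 then (i div W - N*d) div d else N)"

lemma gg_diff: assumes "d \<ge> 2" "0 < W" "s < N" "i < 2*(N*d)*W" "gg N d W s i \<noteq> gg N d W N i"
  shows "lab N d W i = s \<and> gg N d W s i = i"
proof -
  define r where "r = i div W"
  have r: "r < 2*(N*d)" using assms(4) unfolding r_def by (simp add: less_mult_imp_div_less)
  have rM: "N*d \<le> r"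
  proof (rule ccontr)
    assume "\<not> N*d \<le> r"
    thus False using assms(5) unfolding gg_def tq_def cq_def r_def[symmetric] by simp
  qed
  define r' where "r' = r - N*d"
  have r': "r' < N*d" using r rM unfolding r'_def by simp
  have rd: "r' div d < N" using r' by (simp add: less_mult_imp_div_less)
  have ne: "qq d s r' \<noteq> qq d N r'"
    using assms(5) rM unfolding gg_def tq_def cq_def r_def[symmetric] r'_def[symmetric] by auto
  hence c: "r' div d = s \<and> r' mod d < 2" using rd unfolding qq_def by (auto split: if_splits)
  hence "qq d s r' = r'" unfolding qq_def by (metis div_mult_mod_eq)
  moreover have "N*d + r' = i div W" using rM by (simp add: r'_def r_def)
  ultimately have "gg N d W s i = i" using rM unfolding gg_def tq_def cq_def r_def[symmetric] r'_def[symmetric]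
    by (simp add: r_def)
  moreover have "lab N d W i = s" using c rM unfolding lab_def r_def[symmetric] r'_def[symmetric] by simp
  ultimately show ?thesis by simp
qed

lemma lab_gg: assumes "d \<ge> 2" "0 < W" shows "lab N d W (gg N d W N i) = lab N d W i"
proof -
  define r where "r = i div W"
  have g: "gg N d W N i div W = cq (N*d) (qq d N) r" unfolding gg_def r_def using tq_div[OF assms(2)] by simp
  show ?thesis
  proof (cases "r < N*d")
    case True
    thus ?thesis unfolding lab_def g unfolding r_def[symmetric] cq_def by simp
  next
    case False
    hence "cq (N*d) (qq d N) r = N*d + qq d N (r - N*d)" unfolding cq_def by simp
    thus ?thesis unfolding lab_def g unfolding r_def[symmetric] using False qq_div[OF assms(1)]
      by auto
  qed
qed


section \<open>Norms\<close>

definition nsq :: "complex vec \<Rightarrow> real" where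
  "nsq v = (\<Sum>i\<in>{0..<dim_vec v}. (cmod (v $ i))\<^sup>2)"

definition nrm :: "complex vec \<Rightarrow> real" where
  "nrm v = sqrt (nsq v)"

lemma nsq_nonneg: "0 \<le> nsq v" unfolding nsq_def by (simp add: sum_nonneg)

lemma nsq_csq: "complex_of_real (nsq v) = (\<Sum>i\<in>{0..<dim_vec v}. v $ i * cnj (v $ i))"
  unfolding nsq_def by (simp only: of_real_sum complex_norm_square)

lemma unitary_csq:
  assumes U: "unitary_mat n A" and v: "v \<in> carrier_vec n"
  shows "(\<Sum>i\<in>{0..<n}. (A *\<^sub>v v) $ i * cnj ((A *\<^sub>v v) $ i)) = (\<Sum>i\<in>{0..<n}. v $ i * cnj (v $ i))"
proof -
  have A: "A \<in> carrier_mat n n" and adjA: "adj A * A = 1\<^sub>m n" using U unfolding unitary_mat_def by auto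
  have dv: "dim_vec v = n" using v by auto
  have av: "(A *\<^sub>v v) $ i = (\<Sum>j\<in>{0..<n}. A $$ (i,j) * v $ j)" if "i < n" for i
    using that A dv by (auto simp: scalar_prod_def intro!: sum.cong)
  have orth: "(\<Sum>i\<in>{0..<n}. cnj (A $$ (i,k)) * A $$ (i,j)) = (if k = j then 1 else 0)"
    if "k < n" "j < n" for k j
  proof -
    have "(adj A * A) $$ (k,j) = (\<Sum>i\<in>{0..<n}. cnj (A $$ (i,k)) * A $$ (i,j))"
      using that A by (auto simp: adj_def scalar_prod_def intro!: sum.cong)
    thus ?thesis using adjA that by simp
  qed
  have "(\<Sum>i\<in>{0..<n}. (A *\<^sub>v v) $ i * cnj ((A *\<^sub>v v) $ i))
      = (\<Sum>i\<in>{0..<n}. (\<Sum>j\<in>{0..<n}. A $$ (i,j) * v $ j) * (\<Sum>k\<in>{0..<n}. cnj (A $$ (i,k)) * cnj (v $ k)))"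
    by (rule sum.cong) (simp_all add: av)
  also have "\<dots> = (\<Sum>i\<in>{0..<n}. \<Sum>j\<in>{0..<n}. \<Sum>k\<in>{0..<n}. (A $$ (i,j) * v $ j) * (cnj (A $$ (i,k)) * cnj (v $ k)))"
    by (simp add: sum_product)
  also have "\<dots> = (\<Sum>j\<in>{0..<n}. \<Sum>i\<in>{0..<n}. \<Sum>k\<in>{0..<n}. (A $$ (i,j) * v $ j) * (cnj (A $$ (i,k)) * cnj (v $ k)))"
    by (rule sum.swap)
  also have "\<dots> = (\<Sum>j\<in>{0..<n}. \<Sum>k\<in>{0..<n}. \<Sum>i\<in>{0..<n}. (A $$ (i,j) * v $ j) * (cnj (A $$ (i,k)) * cnj (v $ k)))"
    by (rule sum.cong[OF refl], rule sum.swap)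
  also have "\<dots> = (\<Sum>j\<in>{0..<n}. \<Sum>k\<in>{0..<n}. (v $ j * cnj (v $ k)) * (\<Sum>i\<in>{0..<n}. cnj (A $$ (i,k)) * A $$ (i,j)))"
    by (simp add: sum_distrib_left mult_ac)
  also have "\<dots> = (\<Sum>j\<in>{0..<n}. \<Sum>k\<in>{0..<n}. (v $ j * cnj (v $ k)) * (if k = j then 1 else 0))"
    by (intro sum.cong refl) (simp add: orth)
  also have "\<dots> = (\<Sum>j\<in>{0..<n}. v $ j * cnj (v $ j))"
  proof (rule sum.cong[OF refl])
    fix j assume "j \<in> {0..<n}"
    have "(\<Sum>k\<in>{0..<n}. (v $ j * cnj (v $ k)) * (if k = j then 1 else 0)) = (\<Sum>k\<in>{0..<n}. if k = j then v $ j * cnj (v $ k) else 0)"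
      by (rule sum.cong) auto
    thus "(\<Sum>k\<in>{0..<n}. (v $ j * cnj (v $ k)) * (if k = j then 1 else 0)) = v $ j * cnj (v $ j)"
      using \<open>j \<in> {0..<n}\<close> by simp
  qed
  finally show ?thesis .
qed

lemma unitary_nsq:
  assumes U: "unitary_mat n A" and v: "v \<in> carrier_vec n"
  shows "nsq (A *\<^sub>v v) = nsq v"
proof -
  have A: "A \<in> carrier_mat n n" using U unfolding unitary_mat_def by auto
  have "complex_of_real (nsq (A *\<^sub>v v)) = complex_of_real (nsq v)"
    unfolding nsq_csq using unitary_csq[OF U v] A v by simp
  thus ?thesis by simp
qed

lemma unitary_dist:
  assumes U: "unitary_mat n A" and v: "v \<in> carrier_vec n" and w: "w \<in> carrier_vec n"
  shows "nrm (A *\<^sub>v v - A *\<^sub>v w) = nrm (v - w)"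
proof -
  have A: "A \<in> carrier_mat n n" using U unfolding unitary_mat_def by auto
  have "A *\<^sub>v v - A *\<^sub>v w = A *\<^sub>v (v - w)" using mult_minus_distrib_mat_vec[OF A v w] by simp
  thus ?thesis unfolding nrm_def using unitary_nsq[OF U] v w by simp
qed

lemma nrm_L2: "nrm v = L2_set (\<lambda>i. cmod (v $ i)) {0..<dim_vec v}"
  unfolding nrm_def nsq_def L2_set_def ..

lemma nrm_tri:
  assumes "dim_vec u = n" "dim_vec v = n" "dim_vec w = n"
  shows "nrm (u - w) \<le> nrm (u - v) + nrm (v - w)"
proof -
  have "nrm (u - w) = L2_set (\<lambda>i. cmod (u $ i - w $ i)) {0..<n}"
    unfolding nrm_L2 using assms by (auto intro: L2_set_cong)
  also have "\<dots> \<le> L2_set (\<lambda>i. cmod (u $ i - v $ i) + cmod (v $ i - w $ i)) {0..<n}"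
    by (rule L2_set_mono) (auto intro: norm_diff_triangle_ineq[of "u $ _" "v $ _" "v $ _" "w $ _", simplified]
         simp: order_trans[OF _ norm_triangle_ineq])
  also have "\<dots> \<le> L2_set (\<lambda>i. cmod (u $ i - v $ i)) {0..<n} + L2_set (\<lambda>i. cmod (v $ i - w $ i)) {0..<n}"
    by (rule L2_set_triangle_ineq)
  also have "\<dots> = nrm (u - v) + nrm (v - w)"
    unfolding nrm_L2 using assms by (auto intro!: arg_cong2[where f="(+)"] L2_set_cong)
  finally show ?thesis .
qed


section \<open>Gate difference\<close>

definition Pl :: "nat \<Rightarrow> nat \<Rightarrow> nat \<Rightarrow> nat \<Rightarrow> complex vec \<Rightarrow> real" where
  "Pl N d W s v = (\<Sum>i\<in>{0..<dim_vec v}. if lab N d W i = s then (cmod (v $ i))\<^sup>2 else 0)"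

lemma Pl_nonneg: "0 \<le> Pl N d W s v" unfolding Pl_def by (simp add: sum_nonneg)

lemma sq_diff_le: "(cmod (a - b))\<^sup>2 \<le> 2 * (cmod a)\<^sup>2 + 2 * (cmod b)\<^sup>2"
proof -
  have "cmod (a - b) \<le> cmod a + cmod b" by (rule norm_triangle_ineq4)
  hence "(cmod (a - b))\<^sup>2 \<le> (cmod a + cmod b)\<^sup>2" by (simp add: power_mono)
  moreover have "0 \<le> (cmod a - cmod b)\<^sup>2" by simp
  ultimately show ?thesis by (simp add: power2_eq_square algebra_simps)
qed

lemma sum_labels:
  fixes h :: "'a \<Rightarrow> nat" and N :: nat
  assumes "finite K" "\<And>k. 0 \<le> f k"
  shows "(\<Sum>s\<in>{0..<N}. \<Sum>k\<in>K. if h k = s then f k else (0::real)) \<le> (\<Sum>k\<in>K. f k)"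
proof -
  have "(\<Sum>s\<in>{0..<N}. \<Sum>k\<in>K. if h k = s then f k else (0::real))
      = (\<Sum>k\<in>K. \<Sum>s\<in>{0..<N}. if h k = s then f k else (0::real))" by (rule sum.swap)
  also have "\<dots> = (\<Sum>k\<in>K. if h k \<in> {0..<N} then f k else 0)"
    by (intro sum.cong refl) (rule sum.delta'[OF finite_atLeastLessThan, of "h _" "\<lambda>_. f _"])
  also have "\<dots> \<le> (\<Sum>k\<in>K. f k)" by (rule sum_mono) (simp add: assms)
  finally show ?thesis .
qed

lemma Pl_sum: "(\<Sum>s\<in>{0..<N}. Pl N d W s v) \<le> nsq v"
  unfolding Pl_def nsq_def by (rule sum_labels) auto

lemma gate_bound:
  assumes d: "d \<ge> 2" and W: "0 < W" and s: "s < N" and v: "v \<in> carrier_vec (2*(N*d)*W)"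
  shows "nsq (pmat (2*(N*d)*W) (gg N d W s) *\<^sub>v v - pmat (2*(N*d)*W) (gg N d W N) *\<^sub>v v) \<le> 4 * Pl N d W s v"
proof -
  define D where "D = 2*(N*d)*W"
  note iv = invol_gg[OF d W, of N, folded D_def]
  note ivs = invol_gg[OF d W, of N s, folded D_def]
  have dv: "dim_vec v = D" using v D_def by auto
  have vD: "v \<in> carrier_vec D" using v D_def by auto
  let ?g = "gg N d W"
  have ix: "(pmat D (?g s) *\<^sub>v v - pmat D (?g N) *\<^sub>v v) $ i = v $ (?g s i) - v $ (?g N i)" if "i < D" for i
  proof -
    have m1: "(pmat D (?g s) *\<^sub>v v) $ i = v $ (?g s i)"
      by (rule pmat_mult_vec[OF vD that]) (use that ivs in \<open>auto simp: invol_def\<close>)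
    have m2: "(pmat D (?g N) *\<^sub>v v) $ i = v $ (?g N i)"
      by (rule pmat_mult_vec[OF vD that]) (use that iv in \<open>auto simp: invol_def\<close>)
    have "(pmat D (?g s) *\<^sub>v v - pmat D (?g N) *\<^sub>v v) $ i = (pmat D (?g s) *\<^sub>v v) $ i - (pmat D (?g N) *\<^sub>v v) $ i"
      by (rule index_minus_vec) (use that in simp)
    thus ?thesis unfolding m1 m2 .
  qed
  have "nsq (pmat D (?g s) *\<^sub>v v - pmat D (?g N) *\<^sub>v v) = (\<Sum>i\<in>{0..<D}. (cmod (v $ (?g s i) - v $ (?g N i)))\<^sup>2)"
    unfolding nsq_def
  proof (rule sum.cong)
    fix i assume "i \<in> {0..<D}"
    hence "i < D" by simp
    from ix[OF this] show "(cmod ((pmat D (?g s) *\<^sub>v v - pmat D (?g N) *\<^sub>v v) $ i))\<^sup>2 = (cmod (v $ (?g s i) - v $ (?g N i)))\<^sup>2"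
      by simp
  qed simp
  also have "\<dots> \<le> (\<Sum>i\<in>{0..<D}. (if lab N d W i = s then 2 * (cmod (v $ i))\<^sup>2 else 0)
                 + (if lab N d W (?g N i) = s then 2 * (cmod (v $ (?g N i)))\<^sup>2 else 0))"
  proof (rule sum_mono)
    fix i assume i: "i \<in> {0..<D}"
    show "(cmod (v $ (?g s i) - v $ (?g N i)))\<^sup>2 \<le> (if lab N d W i = s then 2 * (cmod (v $ i))\<^sup>2 else 0)
                 + (if lab N d W (?g N i) = s then 2 * (cmod (v $ (?g N i)))\<^sup>2 else 0)"
    proof (cases "?g s i = ?g N i")
      case True thus ?thesis by simp
    next
      case False
      hence "lab N d W i = s \<and> ?g s i = i" using gg_diff[OF d W s _ False] i D_def by simp
      thus ?thesis using sq_diff_le[of "v $ i" "v $ (?g N i)"] lab_gg[OF d W, of N i] by simp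
    qed
  qed
  also have "\<dots> = (\<Sum>i\<in>{0..<D}. if lab N d W i = s then 2 * (cmod (v $ i))\<^sup>2 else 0)
                 + (\<Sum>i\<in>{0..<D}. if lab N d W (?g N i) = s then 2 * (cmod (v $ (?g N i)))\<^sup>2 else 0)"
    by (rule sum.distrib)
  also have "(\<Sum>i\<in>{0..<D}. if lab N d W (?g N i) = s then 2 * (cmod (v $ (?g N i)))\<^sup>2 else 0)
           = (\<Sum>i\<in>{0..<D}. if lab N d W i = s then 2 * (cmod (v $ i))\<^sup>2 else 0)"
    by (rule sum.reindex_bij_witness[of _ "?g N" "?g N"]) (use iv in \<open>auto simp: invol_def\<close>)
  also have "(\<Sum>i\<in>{0..<D}. if lab N d W i = s then 2 * (cmod (v $ i))\<^sup>2 else 0) = 2 * Pl N d W s v"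
    unfolding Pl_def dv by (simp add: sum_distrib_left if_distrib cong: if_cong)
  finally show ?thesis unfolding D_def by simp
qed


section \<open>Hybrid argument\<close>

fun traj :: "nat \<Rightarrow> nat \<Rightarrow> nat \<Rightarrow> (complex mat \<times> bool) list \<Rightarrow> complex vec \<Rightarrow> complex vec list" where
  "traj N d W [] w = []"
| "traj N d W ((A, b) # r) w = (A *\<^sub>v w) # traj N d W r (query_gate (Uo N d N) W b *\<^sub>v (A *\<^sub>v w))"

lemma gate_step:
  assumes d: "d \<ge> 2" and W: "0 < W" and v: "v \<in> carrier_vec (2*(N*d)*W)"
  shows "query_gate (Uo N d s) W b *\<^sub>v v \<in> carrier_vec (2*(N*d)*W)"
    "nsq (query_gate (Uo N d s) W b *\<^sub>v v) = nsq v"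
proof -
  show "query_gate (Uo N d s) W b *\<^sub>v v \<in> carrier_vec (2*(N*d)*W)"
    unfolding gate_eq[OF d W] by (rule mult_mat_vec_carrier[OF pmat_carrier(1) v])
  show "nsq (query_gate (Uo N d s) W b *\<^sub>v v) = nsq v"
    unfolding gate_eq[OF d W] by (rule unitary_nsq[OF unitary_pmat[OF invol_gg[OF d W]] v])
qed

lemma unitary_carrier: "unitary_mat n A \<Longrightarrow> A \<in> carrier_mat n n" unfolding unitary_mat_def by auto

lemma run_carrier:
  assumes d: "d \<ge> 2" and W: "0 < W"
  shows "(\<forall>x\<in>set steps. unitary_mat (2*(N*d)*W) (fst x)) \<Longrightarrow> v \<in> carrier_vec (2*(N*d)*W) \<Longrightarrow>
    run_steps (Uo N d s) W steps v \<in> carrier_vec (2*(N*d)*W) \<and> nsq (run_steps (Uo N d s) W steps v) = nsq v"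
proof (induction steps arbitrary: v)
  case Nil thus ?case by simp
next
  case (Cons x r)
  obtain A b where x: "x = (A, b)" by (cases x)
  have U: "unitary_mat (2*(N*d)*W) A" using Cons.prems x by auto
  have Av: "A *\<^sub>v v \<in> carrier_vec (2*(N*d)*W)" "nsq (A *\<^sub>v v) = nsq v"
    using unitary_carrier[OF U] Cons.prems unitary_nsq[OF U] by auto
  note g = gate_step[OF d W Av(1), of s b]
  have r_u: "\<forall>x\<in>set r. unitary_mat (2*(N*d)*W) (fst x)" using Cons.prems(1) by simp
  note h = Cons.IH[OF r_u g(1)]
  have e: "run_steps (Uo N d s) W (x#r) v = run_steps (Uo N d s) W r (query_gate (Uo N d s) W b *\<^sub>v (A *\<^sub>v v))"
    by (simp add: x)
  show ?case unfolding e using h g(2) Av(2) by simp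
qed

lemma traj_props:
  assumes d: "d \<ge> 2" and W: "0 < W"
  shows "(\<forall>x\<in>set steps. unitary_mat (2*(N*d)*W) (fst x)) \<Longrightarrow> w \<in> carrier_vec (2*(N*d)*W) \<Longrightarrow>
    length (traj N d W steps w) = length steps \<and>
    (\<forall>y\<in>set (traj N d W steps w). y \<in> carrier_vec (2*(N*d)*W) \<and> nsq y = nsq w)"
proof (induction steps arbitrary: w)
  case Nil thus ?case by simp
next
  case (Cons x r)
  obtain A b where x: "x = (A, b)" by (cases x)
  have U: "unitary_mat (2*(N*d)*W) A" using Cons.prems x by auto
  have Av: "A *\<^sub>v w \<in> carrier_vec (2*(N*d)*W)" "nsq (A *\<^sub>v w) = nsq w"
    using unitary_carrier[OF U] Cons.prems unitary_nsq[OF U] by auto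
  note g = gate_step[OF d W Av(1), of N b]
  have r_u: "\<forall>x\<in>set r. unitary_mat (2*(N*d)*W) (fst x)" using Cons.prems(1) by simp
  note h = Cons.IH[OF r_u g(1)]
  have e: "traj N d W (x#r) w = (A *\<^sub>v w) # traj N d W r (query_gate (Uo N d N) W b *\<^sub>v (A *\<^sub>v w))"
    by (simp add: x)
  show ?case unfolding e using h g(2) Av by auto
qed

lemma hybrid:
  assumes d: "d \<ge> 2" and W: "0 < W" and s: "s < N"
  shows "(\<forall>x\<in>set steps. unitary_mat (2*(N*d)*W) (fst x)) \<Longrightarrow> v \<in> carrier_vec (2*(N*d)*W) \<Longrightarrow>
    w \<in> carrier_vec (2*(N*d)*W) \<Longrightarrow>
    nrm (run_steps (Uo N d s) W steps v - run_steps (Uo N d N) W steps w)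
      \<le> nrm (v - w) + sum_list (map (\<lambda>y. 2 * sqrt (Pl N d W s y)) (traj N d W steps w))"
proof (induction steps arbitrary: v w)
  case Nil thus ?case by simp
next
  case (Cons x r)
  define D where "D = 2*(N*d)*W"
  obtain A b where x: "x = (A, b)" by (cases x)
  have U: "unitary_mat D A" using Cons.prems x D_def by auto
  have A: "A \<in> carrier_mat D D" using unitary_carrier[OF U] .
  have Av: "A *\<^sub>v v \<in> carrier_vec D" "A *\<^sub>v w \<in> carrier_vec D" using A Cons.prems D_def by auto
  define Gs where "Gs = pmat D (gg N d W s)"
  define GN where "GN = pmat D (gg N d W N)"
  have gs: "query_gate (Uo N d s) W b = Gs" unfolding Gs_def D_def by (rule gate_eq[OF d W])
  have gn: "query_gate (Uo N d N) W b = GN" unfolding GN_def D_def by (rule gate_eq[OF d W])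
  have UGs: "unitary_mat D Gs" unfolding Gs_def D_def by (rule unitary_pmat[OF invol_gg[OF d W]])
  have c1: "Gs *\<^sub>v (A *\<^sub>v v) \<in> carrier_vec D" "GN *\<^sub>v (A *\<^sub>v w) \<in> carrier_vec D"
    "Gs *\<^sub>v (A *\<^sub>v w) \<in> carrier_vec D"
    unfolding Gs_def GN_def by (rule mult_mat_vec_carrier[OF pmat_carrier(1)], fact)+
  have IH: "nrm (run_steps (Uo N d s) W r (Gs *\<^sub>v (A *\<^sub>v v)) - run_steps (Uo N d N) W r (GN *\<^sub>v (A *\<^sub>v w)))
      \<le> nrm (Gs *\<^sub>v (A *\<^sub>v v) - GN *\<^sub>v (A *\<^sub>v w))
         + sum_list (map (\<lambda>y. 2 * sqrt (Pl N d W s y)) (traj N d W r (GN *\<^sub>v (A *\<^sub>v w))))"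
  proof -
    have r_u: "\<forall>x\<in>set r. unitary_mat (2*(N*d)*W) (fst x)" using Cons.prems(1) by simp
    show ?thesis by (rule Cons.IH[OF r_u c1(1)[unfolded D_def] c1(2)[unfolded D_def]])
  qed
  have "nrm (Gs *\<^sub>v (A *\<^sub>v v) - GN *\<^sub>v (A *\<^sub>v w))
     \<le> nrm (Gs *\<^sub>v (A *\<^sub>v v) - Gs *\<^sub>v (A *\<^sub>v w)) + nrm (Gs *\<^sub>v (A *\<^sub>v w) - GN *\<^sub>v (A *\<^sub>v w))"
    by (rule nrm_tri) (use c1 in \<open>auto simp: Gs_def GN_def\<close>)
  also have "nrm (Gs *\<^sub>v (A *\<^sub>v v) - Gs *\<^sub>v (A *\<^sub>v w)) = nrm (v - w)"
  proof -
    have vD: "v \<in> carrier_vec D" and wD: "w \<in> carrier_vec D" using Cons.prems D_def by simp_all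
    show ?thesis using unitary_dist[OF UGs Av] unitary_dist[OF U vD wD] by simp
  qed
  also have "nrm (Gs *\<^sub>v (A *\<^sub>v w) - GN *\<^sub>v (A *\<^sub>v w)) \<le> 2 * sqrt (Pl N d W s (A *\<^sub>v w))"
  proof -
    have "nsq (Gs *\<^sub>v (A *\<^sub>v w) - GN *\<^sub>v (A *\<^sub>v w)) \<le> 4 * Pl N d W s (A *\<^sub>v w)"
      unfolding Gs_def GN_def D_def by (rule gate_bound[OF d W s]) (use Av D_def in simp)
    hence "nrm (Gs *\<^sub>v (A *\<^sub>v w) - GN *\<^sub>v (A *\<^sub>v w)) \<le> sqrt (4 * Pl N d W s (A *\<^sub>v w))"
      unfolding nrm_def by simp
    also have "\<dots> = 2 * sqrt (Pl N d W s (A *\<^sub>v w))" by (simp add: real_sqrt_mult)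
    finally show ?thesis .
  qed
  finally have fin: "nrm (Gs *\<^sub>v (A *\<^sub>v v) - GN *\<^sub>v (A *\<^sub>v w)) \<le> nrm (v - w) + 2 * sqrt (Pl N d W s (A *\<^sub>v w))"
    by simp
  have e1: "run_steps (Uo N d s) W (x#r) v = run_steps (Uo N d s) W r (Gs *\<^sub>v (A *\<^sub>v v))"
    by (simp add: x gs)
  have e2: "run_steps (Uo N d N) W (x#r) w = run_steps (Uo N d N) W r (GN *\<^sub>v (A *\<^sub>v w))"
    by (simp add: x gn)
  have e3: "traj N d W (x#r) w = (A *\<^sub>v w) # traj N d W r (GN *\<^sub>v (A *\<^sub>v w))"
    by (simp add: x gn)
  show ?case unfolding e1 e2 e3 list.map sum_list.Cons using IH fin by linarith
qed


lemma cs_sum: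
  fixes F :: "nat \<Rightarrow> real"
  assumes "finite A"
  shows "(\<Sum>t\<in>A. F t)\<^sup>2 \<le> real (card A) * (\<Sum>t\<in>A. (F t)\<^sup>2)"
proof -
  have "\<bar>\<Sum>t\<in>A. F t\<bar> \<le> (\<Sum>t\<in>A. \<bar>F t\<bar> * \<bar>1\<bar>)" by (simp add: sum_abs)
  also have "\<dots> \<le> L2_set F A * L2_set (\<lambda>_. 1) A" by (rule L2_set_mult_ineq)
  also have "\<dots> = L2_set F A * sqrt (real (card A))" by (simp add: L2_set_constant)
  finally have h: "\<bar>\<Sum>t\<in>A. F t\<bar> \<le> L2_set F A * sqrt (real (card A))" .
  have "(\<Sum>t\<in>A. F t)\<^sup>2 = \<bar>\<Sum>t\<in>A. F t\<bar>\<^sup>2" by simp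
  also have "\<dots> \<le> (L2_set F A * sqrt (real (card A)))\<^sup>2" by (rule power_mono[OF h]) simp
  also have "\<dots> = (L2_set F A)\<^sup>2 * real (card A)" by (simp add: power_mult_distrib)
  also have "(L2_set F A)\<^sup>2 = (\<Sum>t\<in>A. (F t)\<^sup>2)" unfolding L2_set_def
    by (simp add: sum_nonneg)
  finally show ?thesis by (simp add: mult.commute)
qed

lemma sl_eq: "sum_list (map g ys) = (\<Sum>t\<in>{0..<length ys}. g (ys ! t))"
  by (subst sum_list_sum_nth) (rule sum.cong, auto)

lemma hyb_sum:
  assumes ys: "\<And>y. y \<in> set ys \<Longrightarrow> nsq y = 1"
  shows "(\<Sum>s\<in>{0..<N}. (sum_list (map (\<lambda>y. 2 * sqrt (Pl N d W s y)) ys))\<^sup>2) \<le> 4 * (real (length ys))\<^sup>2"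
proof -
  define T where "T = length ys"
  have "(\<Sum>s\<in>{0..<N}. (sum_list (map (\<lambda>y. 2 * sqrt (Pl N d W s y)) ys))\<^sup>2)
      = (\<Sum>s\<in>{0..<N}. (\<Sum>t\<in>{0..<T}. 2 * sqrt (Pl N d W s (ys ! t)))\<^sup>2)"
    unfolding sl_eq T_def ..
  also have "\<dots> \<le> (\<Sum>s\<in>{0..<N}. real T * (\<Sum>t\<in>{0..<T}. (2 * sqrt (Pl N d W s (ys ! t)))\<^sup>2))"
  proof (rule sum_mono)
    fix s
    show "(\<Sum>t\<in>{0..<T}. 2 * sqrt (Pl N d W s (ys ! t)))\<^sup>2 \<le> real T * (\<Sum>t\<in>{0..<T}. (2 * sqrt (Pl N d W s (ys ! t)))\<^sup>2)"
      using cs_sum[of "{0..<T}" "\<lambda>t. 2 * sqrt (Pl N d W s (ys ! t))"] by simp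
  qed
  also have "\<dots> = (\<Sum>s\<in>{0..<N}. real T * (\<Sum>t\<in>{0..<T}. 4 * Pl N d W s (ys ! t)))"
    by (intro sum.cong refl arg_cong2[where f="(*)"]) (simp_all add: power_mult_distrib Pl_nonneg)
  also have "\<dots> = 4 * real T * (\<Sum>t\<in>{0..<T}. \<Sum>s\<in>{0..<N}. Pl N d W s (ys ! t))"
    by (simp add: sum_distrib_left mult_ac sum.swap[of _ "{0..<N}"])
  also have "\<dots> \<le> 4 * real T * (\<Sum>t\<in>{0..<T}. 1)"
  proof (rule mult_left_mono[OF sum_mono])
    fix t assume "t \<in> {0..<T}"
    hence "ys ! t \<in> set ys" unfolding T_def by simp
    thus "(\<Sum>s\<in>{0..<N}. Pl N d W s (ys ! t)) \<le> 1" using Pl_sum[of N d W "ys ! t"] ys by simp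
  qed simp
  also have "\<dots> = 4 * (real (length ys))\<^sup>2" by (simp add: T_def power2_eq_square)
  finally show ?thesis .
qed

section \<open>Success probabilities\<close>

lemma op_L2: "sqrt (outcome_prob v out x) = L2_set (\<lambda>k. if out k = x then cmod (v $ k) else 0) {0..<dim_vec v}"
  unfolding outcome_prob_def L2_set_def lessThan_atLeast0
  by (intro arg_cong[where f=sqrt] sum.cong) auto

lemma sp_tri:
  assumes "dim_vec u = n" "dim_vec v = n"
  shows "sqrt (outcome_prob u out x) \<le> sqrt (outcome_prob v out x) + nrm (u - v)"
proof -
  have "sqrt (outcome_prob u out x) = L2_set (\<lambda>k. if out k = x then cmod (u $ k) else 0) {0..<n}"
    unfolding op_L2 using assms by simp
  also have "\<dots> \<le> L2_set (\<lambda>k. (if out k = x then cmod (v $ k) else 0) + cmod (u $ k - v $ k)) {0..<n}"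
  proof (rule L2_set_mono)
    fix k
    have "cmod (u $ k) \<le> cmod (v $ k) + cmod (u $ k - v $ k)"
      using norm_triangle_ineq[of "v $ k" "u $ k - v $ k"] by simp
    thus "(if out k = x then cmod (u $ k) else 0) \<le> (if out k = x then cmod (v $ k) else 0) + cmod (u $ k - v $ k)"
      by simp
  qed simp
  also have "\<dots> \<le> L2_set (\<lambda>k. if out k = x then cmod (v $ k) else 0) {0..<n} + L2_set (\<lambda>k. cmod (u $ k - v $ k)) {0..<n}"
    by (rule L2_set_triangle_ineq)
  also have "\<dots> = sqrt (outcome_prob v out x) + nrm (u - v)"
    unfolding op_L2 nrm_L2 using assms by (auto intro!: arg_cong2[where f="(+)"] L2_set_cong)
  finally show ?thesis .
qed

lemma op_sum: "(\<Sum>x\<in>{0..<N}. outcome_prob v out x) \<le> nsq v"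
  unfolding outcome_prob_def nsq_def lessThan_atLeast0 by (rule sum_labels) auto

lemma op_nonneg: "0 \<le> outcome_prob v out x"
  unfolding outcome_prob_def by (simp add: sum_nonneg)

lemma key_ineq:
  fixes A B h :: real
  assumes "0 \<le> A" "0 \<le> B" "0 \<le> h" "sqrt A \<le> sqrt B + h"
  shows "A / 2 - B \<le> h\<^sup>2"
proof -
  define a b where "a = sqrt A" "b = sqrt B"
  have a: "a\<^sup>2 = A" "0 \<le> a" and b: "b\<^sup>2 = B" "0 \<le> b" using assms unfolding a_b_def by simp_all
  have ab: "a \<le> b + h" using assms unfolding a_b_def by simp
  have sq: "0 \<le> (a - 2 * b)\<^sup>2" by simp
  show ?thesis
  proof (cases "a \<le> b")
    case True
    have "a\<^sup>2 \<le> b\<^sup>2" by (rule power_mono[OF True a(2)])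
    moreover have "0 \<le> h\<^sup>2" by simp
    ultimately show ?thesis using a b assms(1) by linarith
  next
    case False
    hence "(a - b)\<^sup>2 \<le> h\<^sup>2" using ab by (intro power_mono) auto
    moreover have "a\<^sup>2 / 2 - b\<^sup>2 \<le> (a - b)\<^sup>2" using sq by (simp add: power2_eq_square algebra_simps)
    ultimately show ?thesis using a b by simp
  qed
qed


lemma nsq_ket: "0 < n \<Longrightarrow> nsq (ket n 0) = 1"
proof -
  assume n: "0 < n"
  have "nsq (ket n 0) = (\<Sum>i\<in>{0..<n}. if i = 0 then 1 else 0)"
    unfolding nsq_def ket_def by (intro sum.cong) auto
  thus ?thesis using n by simp
qed

lemma nrm_self: "nrm (v - v) = 0"
  unfolding nrm_def nsq_def by simp

lemma lower_bound:
  assumes N: "N \<ge> 2" and d: "d \<ge> 2" and W1: "W \<ge> 1"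
    and valid: "valid_alg (2 * (N * d) * W) steps Af"
    and succ: "\<forall>\<sigma><N. \<forall>U. block_encoding N d (diag_C N \<sigma>) U \<longrightarrow>
          outcome_prob (final_state U W steps Af (2 * (N * d) * W)) out \<sigma> \<ge> 2/3"
  shows "real (length steps) \<ge> 1/4 * sqrt (real N)"
proof -
  define D where "D = 2 * (N * d) * W"
  have W: "0 < W" using W1 by simp
  have Dpos: "0 < D" unfolding D_def using N d W by simp
  define e0 where "e0 = ket D 0"
  have e0: "e0 \<in> carrier_vec D" "nsq e0 = 1" unfolding e0_def using nsq_ket[OF Dpos] by (auto simp: ket_def)
  have su: "\<forall>x\<in>set steps. unitary_mat (2*(N*d)*W) (fst x)" and UA: "unitary_mat D Af"
    using valid unfolding valid_alg_def D_def by auto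
  have AfC: "Af \<in> carrier_mat D D" using unitary_carrier[OF UA] .
  define T where "T = length steps"
  define ys where "ys = traj N d W steps e0"
  have tp: "length ys = T" "\<And>y. y \<in> set ys \<Longrightarrow> nsq y = 1"
    using traj_props[OF d W su e0(1)[unfolded D_def]] e0(2) unfolding ys_def T_def by auto
  define h where "h s = sum_list (map (\<lambda>y. 2 * sqrt (Pl N d W s y)) ys)" for s
  have h0: "0 \<le> h s" for s unfolding h_def by (intro sum_list_nonneg) (auto simp: Pl_nonneg)
  define \<rho> where "\<rho> s = run_steps (Uo N d s) W steps e0" for s
  have \<rho>: "\<rho> s \<in> carrier_vec D" "nsq (\<rho> s) = 1" for s
    using run_carrier[OF d W su e0(1)[unfolded D_def], of s] e0(2) unfolding \<rho>_def D_def by auto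
  define \<phi> where "\<phi> s = Af *\<^sub>v \<rho> s" for s
  have \<phi>dim: "dim_vec (\<phi> s) = D" for s unfolding \<phi>_def using AfC by simp
  have \<phi>N: "nsq (\<phi> N) = 1" unfolding \<phi>_def using unitary_nsq[OF UA \<rho>(1)] \<rho>(2) by simp
  have dist: "nrm (\<phi> s - \<phi> N) \<le> h s" if s: "s < N" for s
  proof -
    have "nrm (\<phi> s - \<phi> N) = nrm (\<rho> s - \<rho> N)" unfolding \<phi>_def by (rule unitary_dist[OF UA \<rho>(1) \<rho>(1)])
    also have "\<dots> \<le> nrm (e0 - e0) + h s"
      unfolding \<rho>_def h_def ys_def by (rule hybrid[OF d W s su e0(1)[unfolded D_def] e0(1)[unfolded D_def]])
    finally show ?thesis by (simp add: nrm_self)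
  qed
  define A where "A s = outcome_prob (\<phi> s) out s" for s
  define B where "B s = outcome_prob (\<phi> N) out s" for s
  have A23: "A s \<ge> 2/3" if s: "s < N" for s
  proof -
    have "block_encoding N d (diag_C N s) (Uo N d s)" by (rule Uo_be[OF d s])
    hence "outcome_prob (final_state (Uo N d s) W steps Af D) out s \<ge> 2/3" using succ s D_def by auto
    thus ?thesis unfolding A_def \<phi>_def \<rho>_def final_state_def e0_def .
  qed
  have AB: "sqrt (A s) \<le> sqrt (B s) + h s" if s: "s < N" for s
    using sp_tri[OF \<phi>dim[of s] \<phi>dim[of N], of out s] dist[OF s] unfolding A_def B_def by simp
  have Bsum: "(\<Sum>s\<in>{0..<N}. B s) \<le> 1" unfolding B_def using op_sum[where N=N and v="\<phi> N" and out=out] \<phi>N by simp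
  have hsum: "(\<Sum>s\<in>{0..<N}. (h s)\<^sup>2) \<le> 4 * (real T)\<^sup>2"
    unfolding h_def using hyb_sum[where ys=ys and N=N and d=d and W=W, OF tp(2)] tp(1) by simp
  have T1: "T \<ge> 1"
  proof (rule ccontr)
    assume "\<not> T \<ge> 1"
    hence "T = 0" by simp
    hence "ys = []" using tp(1) by simp
    hence "h s = 0" for s unfolding h_def by simp
    hence "A s \<le> B s" if "s < N" for s using AB[OF that] op_nonneg[of "\<phi> N" out s] unfolding B_def by simp
    hence "(\<Sum>s\<in>{0..<N}. 2/3) \<le> (\<Sum>s\<in>{0..<N}. B s)" using A23 by (intro sum_mono) (meson atLeastLessThan_iff order_trans)
    hence "real N * (2/3) \<le> 1" using Bsum by simp
    thus False using N by simp
  qed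
  have "(\<Sum>s\<in>{0..<N}. 1/3 - B s) \<le> (\<Sum>s\<in>{0..<N}. (h s)\<^sup>2)"
  proof (rule sum_mono)
    fix s assume "s \<in> {0..<N}"
    hence s: "s < N" by simp
    have "A s / 2 - B s \<le> (h s)\<^sup>2"
      by (rule key_ineq) (use AB[OF s] h0 in \<open>auto simp: A_def B_def op_nonneg\<close>)
    thus "1/3 - B s \<le> (h s)\<^sup>2" using A23[OF s] by simp
  qed
  hence "real N / 3 - 1 \<le> 4 * (real T)\<^sup>2" using hsum Bsum by (simp add: sum_subtractf)
  moreover have "1 \<le> (real T)\<^sup>2" using T1 by simp
  ultimately have "real N \<le> (4 * real T)\<^sup>2" by (simp add: power_mult_distrib)
  hence "sqrt (real N) \<le> sqrt ((4 * real T)\<^sup>2)" by (rule real_sqrt_le_mono)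
  moreover have "sqrt ((4 * real T)\<^sup>2) = 4 * real T" by (rule real_sqrt_unique) auto
  ultimately have "sqrt (real N) \<le> 4 * real T" by linarith
  thus ?thesis unfolding T_def by simp
qed

lemma vectorize_part:
  assumes s: "\<sigma> < N" and e: "V *\<^sub>v ket (N * N) 0 = vectorize (diag_C N \<sigma>)"
  shows "outcome_prob (V *\<^sub>v ket (N * N) 0) (\<lambda>k. k div N) \<sigma> = 1"
proof -
  define v where "v = vectorize (diag_C N \<sigma>)"
  have dv: "dim_vec v = N * N" unfolding v_def vectorize_def diag_C_def by simp
  have vi: "v $ k = (if k = \<sigma> * N + \<sigma> then 1 else 0)" if k: "k < N * N" for k
  proof -
    have kd: "k div N < N" using k by (simp add: less_mult_imp_div_less)
    have Np: "0 < N" using s by simp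
    have km: "k mod N < N" using Np by simp
    have "v $ k = (if k div N = \<sigma> \<and> k mod N = \<sigma> then 1 else 0)"
      unfolding v_def vectorize_def diag_C_def using k kd km by simp
    also have "(k div N = \<sigma> \<and> k mod N = \<sigma>) = (k = \<sigma> * N + \<sigma>)"
      using s by (metis div_mult_mod_eq mod_less div_mult_self1 div_less add.commute Np
                      mod_mult_self2 less_nat_zero_code mult.commute add_0 not_gr_zero)
    finally show ?thesis .
  qed
  have lt: "\<sigma> * N + \<sigma> < N * N"
  proof -
    have "\<sigma> * N + \<sigma> < \<sigma> * N + N" using s by simp
    also have "\<dots> = (\<sigma> + 1) * N" by simp
    also have "\<dots> \<le> N * N" using s by (intro mult_right_mono) auto
    finally show ?thesis .
  qed
  have "outcome_prob v (\<lambda>k. k div N) \<sigma> = (\<Sum>k\<in>{..<N*N}. if k = \<sigma> * N + \<sigma> then 1 else 0)"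
    unfolding outcome_prob_def dv
  proof (rule sum.cong[OF refl])
    fix k assume "k \<in> {..<N*N}"
    hence k: "k < N * N" by simp
    show "(if k div N = \<sigma> then (cmod (v $ k))\<^sup>2 else 0) = (if k = \<sigma> * N + \<sigma> then 1 else 0)"
      using vi[OF k] s by auto
  qed
  also have "\<dots> = 1" using lt by simp
  finally show ?thesis using e unfolding v_def by simp
qed

theorem theorem4:
  shows
  "(\<exists>c>0. \<forall>(N::nat) (d::nat) (W::nat) (steps :: (complex mat \<times> bool) list) (Af :: complex mat)
        (out :: nat \<Rightarrow> nat).
      N \<ge> 2 \<longrightarrow> d \<ge> 2 \<longrightarrow> W \<ge> 1 \<longrightarrow>
      valid_alg (2 * (N * d) * W) steps Af \<longrightarrow>
      (\<forall>\<sigma><N. \<forall>U. block_encoding N d (diag_C N \<sigma>) U \<longrightarrow>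
          outcome_prob (final_state U W steps Af (2 * (N * d) * W)) out \<sigma> \<ge> 2/3) \<longrightarrow>
      real (length steps) \<ge> c * sqrt (real N))
   \<and>
   (\<forall>(N::nat) \<sigma> (V :: complex mat). \<sigma> < N \<longrightarrow> unitary_mat (N * N) V \<longrightarrow>
      V *\<^sub>v ket (N * N) 0 = vectorize (diag_C N \<sigma>) \<longrightarrow>
      outcome_prob (V *\<^sub>v ket (N * N) 0) (\<lambda>k. k div N) \<sigma> = 1)"
proof (intro conjI)
  show "\<exists>c>0. \<forall>(N::nat) (d::nat) (W::nat) (steps :: (complex mat \<times> bool) list) (Af :: complex mat)
        (out :: nat \<Rightarrow> nat).
      N \<ge> 2 \<longrightarrow> d \<ge> 2 \<longrightarrow> W \<ge> 1 \<longrightarrow>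
      valid_alg (2 * (N * d) * W) steps Af \<longrightarrow>
      (\<forall>\<sigma><N. \<forall>U. block_encoding N d (diag_C N \<sigma>) U \<longrightarrow>
          outcome_prob (final_state U W steps Af (2 * (N * d) * W)) out \<sigma> \<ge> 2/3) \<longrightarrow>
      real (length steps) \<ge> c * sqrt (real N)"
    apply (rule exI[of _ "1/4"], intro conjI allI impI)
     apply simp
    apply (rule lower_bound; assumption)
    done
  show "\<forall>(N::nat) \<sigma> (V :: complex mat). \<sigma> < N \<longrightarrow> unitary_mat (N * N) V \<longrightarrow>
      V *\<^sub>v ket (N * N) 0 = vectorize (diag_C N \<sigma>) \<longrightarrow>
      outcome_prob (V *\<^sub>v ket (N * N) 0) (\<lambda>k. k div N) \<sigma> = 1"
    using vectorize_part by blast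
qed

end
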